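(* Let $G=(V,A)$ be a weighted digraph with $V=\{1,\dots,n\}$, arc weights $w_{ij}>0$ for arcs $i\to j\in A$, and every vertex of positive degree. Define, for $\mathbf{x}\in\mathbb{R}^n$, $$I^+(\mathbf{x})=\sum_{i\to j\in A} w_{ij}|x_i+x_j|,\qquad J(\mathbf{x})=\Big|\sum_{i\to j\in A} w_{ij}(x_i-x_j)\Big|=\Big|\sum_{i\in V} d_i^{\delta}x_i\Big|,\qquad N(\mathbf{x})=\min_{c\in\mathbb{R}}\sum_{i\in V} d_i|x_i-c|,$$ and, for $\mathbf{x}$ not a constant vector, $$r(\mathbf{x})=\frac{\mathrm{Vol}(V)\|\mathbf{x}\|_\infty-I^+(\mathbf{x})-J(\mathbf{x})}{2N(\mathbf{x})}.$$ Then $$\min_{\mathbf{x}\in\mathbb{R}^n\setminus\{t\mathbf{1}:\,t\in\mathbb{R}\}} r(\mathbf{x})=\min_{\emptyset\neq S\subsetneq V}\varphi_D(S).$$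
   Context: For a vertex $v$, $d_v^+$ (resp. $d_v^-$) is the sum of the weights of arcs leaving (resp. entering) $v$; $d_v=d_v^++d_v^-$ and $d_v^\delta=d_v^+-d_v^-$. For $S\subseteq V$, $\mathrm{Vol}(S)=\sum_{v\in S}d_v$ and $\bar S=V\setminus S$. $\mathrm{cut}^+(S)$ is the total weight of arcs $i\to j$ with $i\in S$, $j\notin S$, and $\mathrm{cut}^-(S)$ the total weight of arcs $i\to j$ with $i\notin S$, $j\in S$. The digraph conductance of a nonempty proper subset $S$ is $$\varphi_D(S)=\frac{\min\{\mathrm{cut}^+(S),\mathrm{cut}^-(S)\}}{\min\{\mathrm{Vol}(S),\mathrm{Vol}(\bar S)\}}.$$ $\mathbf{1}$ denotes the all-ones vector. *)

theory Defs
  imports Complex_Main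
begin

text \<open>Weighted digraph on a finite vertex type 'v, given by a weight function w;
  the arc i -> j is present iff w i j > 0.\<close>

definition outdeg :: "('v::finite \<Rightarrow> 'v \<Rightarrow> real) \<Rightarrow> 'v \<Rightarrow> real" where
  "outdeg w i = (\<Sum>j\<in>UNIV. w i j)"

definition indeg :: "('v::finite \<Rightarrow> 'v \<Rightarrow> real) \<Rightarrow> 'v \<Rightarrow> real" where
  "indeg w i = (\<Sum>j\<in>UNIV. w j i)"

definition deg :: "('v::finite \<Rightarrow> 'v \<Rightarrow> real) \<Rightarrow> 'v \<Rightarrow> real" where
  "deg w i = outdeg w i + indeg w i"

definition vol :: "('v::finite \<Rightarrow> 'v \<Rightarrow> real) \<Rightarrow> 'v set \<Rightarrow> real" where
  "vol w S = (\<Sum>i\<in>S. deg w i)"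

definition cut_out :: "('v::finite \<Rightarrow> 'v \<Rightarrow> real) \<Rightarrow> 'v set \<Rightarrow> real" where
  "cut_out w S = (\<Sum>i\<in>S. \<Sum>j\<in>UNIV - S. w i j)"

definition cut_in :: "('v::finite \<Rightarrow> 'v \<Rightarrow> real) \<Rightarrow> 'v set \<Rightarrow> real" where
  "cut_in w S = (\<Sum>i\<in>UNIV - S. \<Sum>j\<in>S. w i j)"

definition phiD :: "('v::finite \<Rightarrow> 'v \<Rightarrow> real) \<Rightarrow> 'v set \<Rightarrow> real" where
  "phiD w S = min (cut_out w S) (cut_in w S) / min (vol w S) (vol w (UNIV - S))"

definition Iplus :: "('v::finite \<Rightarrow> 'v \<Rightarrow> real) \<Rightarrow> ('v \<Rightarrow> real) \<Rightarrow> real" where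
  "Iplus w x = (\<Sum>i\<in>UNIV. \<Sum>j\<in>UNIV. w i j * \<bar>x i + x j\<bar>)"

definition Jfun :: "('v::finite \<Rightarrow> 'v \<Rightarrow> real) \<Rightarrow> ('v \<Rightarrow> real) \<Rightarrow> real" where
  "Jfun w x = \<bar>\<Sum>i\<in>UNIV. \<Sum>j\<in>UNIV. w i j * (x i - x j)\<bar>"

definition Nfun :: "('v::finite \<Rightarrow> 'v \<Rightarrow> real) \<Rightarrow> ('v \<Rightarrow> real) \<Rightarrow> real" where
  "Nfun w x = (INF c. \<Sum>i\<in>UNIV. deg w i * \<bar>x i - c\<bar>)"

definition sup_norm :: "('v::finite \<Rightarrow> real) \<Rightarrow> real" where
  "sup_norm x = Max (range (\<lambda>i. \<bar>x i\<bar>))"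

definition rfun :: "('v::finite \<Rightarrow> 'v \<Rightarrow> real) \<Rightarrow> ('v \<Rightarrow> real) \<Rightarrow> real" where
  "rfun w x = (vol w UNIV * sup_norm x - Iplus w x - Jfun w x) / (2 * Nfun w x)"

definition nonconstant :: "('v \<Rightarrow> real) \<Rightarrow> bool" where
  "nonconstant x \<longleftrightarrow> (\<nexists>t. x = (\<lambda>_. t))"

end

theory Submission imports Defs begin

lemma sum_ind: "(\<Sum>i\<in>(UNIV::'a::finite set). f i * of_bool (i \<in> S)) = (sum f S :: real)"
proof -
  have "(\<Sum>i\<in>(UNIV::'a set). f i * of_bool (i \<in> S)) = (\<Sum>i\<in>UNIV. if i \<in> S then f i else 0)"
    by (intro sum.cong) auto
  also have "\<dots> = sum f (UNIV \<inter> S)" by (rule sum.inter_restrict[symmetric]) simp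
  finally show ?thesis by simp
qed

lemma dsum_restrict:
  fixes w :: "'v::finite \<Rightarrow> 'v \<Rightarrow> real"
  shows "(\<Sum>i\<in>A. \<Sum>j\<in>B. w i j) = (\<Sum>i\<in>UNIV. \<Sum>j\<in>UNIV. w i j * of_bool (i \<in> A \<and> j \<in> B))"
proof -
  have "(\<Sum>j\<in>UNIV. w i j * of_bool (i \<in> A \<and> j \<in> B)) = (\<Sum>j\<in>B. w i j) * of_bool (i \<in> A)" for i
    by (cases "i \<in> A") (simp_all add: sum_ind)
  then show ?thesis by (simp add: sum_ind)
qed

lemma cut_out_eq: "cut_out w S = (\<Sum>i\<in>UNIV. \<Sum>j\<in>UNIV. w i j * of_bool (i \<in> S \<and> j \<notin> S))"
  unfolding cut_out_def by (subst dsum_restrict) simp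

lemma cut_in_eq: "cut_in w S = (\<Sum>i\<in>UNIV. \<Sum>j\<in>UNIV. w i j * of_bool (i \<notin> S \<and> j \<in> S))"
  unfolding cut_in_def by (subst dsum_restrict) simp

lemma vol_univ: "vol w UNIV = (\<Sum>i\<in>UNIV. \<Sum>j\<in>UNIV. 2 * w i j)"
  unfolding vol_def deg_def outdeg_def indeg_def
  by (simp add: sum.distrib sum_distrib_left[symmetric] sum.swap[of "\<lambda>i j. w j i"])

lemma vol_compl: "vol w (UNIV - S) = vol w UNIV - vol w S"
  unfolding vol_def by (simp add: sum_diff)

lemma deg_nonneg: "(\<And>i j. w i j \<ge> 0) \<Longrightarrow> deg w i \<ge> 0"
  unfolding deg_def outdeg_def indeg_def by (simp add: sum_nonneg add_nonneg_nonneg)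

lemma vol_nonneg: "(\<And>i j. w i j \<ge> 0) \<Longrightarrow> vol w S \<ge> 0"
  unfolding vol_def by (simp add: sum_nonneg deg_nonneg)

lemma cut_nonneg: "(\<And>i j. w i j \<ge> 0) \<Longrightarrow> cut_out w S \<ge> 0 \<and> cut_in w S \<ge> 0"
  unfolding cut_out_def cut_in_def by (simp add: sum_nonneg)

lemma vol_sum_ind: "vol w S = (\<Sum>i\<in>UNIV. deg w i * of_bool (i \<in> S))"
  unfolding vol_def by (simp add: sum_ind)

lemma Iplus_scale: "Iplus w (\<lambda>i. a * x i) = \<bar>a\<bar> * Iplus w x" if "\<And>i j. w i j \<ge> 0"
  unfolding Iplus_def sum_distrib_left
  by (intro sum.cong refl) (simp add: distrib_left[symmetric] abs_mult)

lemma Jfun_scale: "Jfun w (\<lambda>i. a * x i) = \<bar>a\<bar> * Jfun w x"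
proof -
  have "(\<Sum>i\<in>UNIV. \<Sum>j\<in>UNIV. w i j * (a * x i - a * x j)) = a * (\<Sum>i\<in>UNIV. \<Sum>j\<in>UNIV. w i j * (x i - x j))"
    unfolding sum_distrib_left by (intro sum.cong refl) (simp add: algebra_simps)
  then show ?thesis unfolding Jfun_def by (simp add: abs_mult)
qed

lemma Iplus_add: "Iplus w (\<lambda>i. x i + y i) \<le> Iplus w x + Iplus w y" if "\<And>i j. w i j \<ge> 0"
proof -
  have "w i j * \<bar>x i + y i + (x j + y j)\<bar> \<le> w i j * \<bar>x i + x j\<bar> + w i j * \<bar>y i + y j\<bar>" for i j
  proof -
    have "\<bar>x i + y i + (x j + y j)\<bar> \<le> \<bar>x i + x j\<bar> + \<bar>y i + y j\<bar>" by linarith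
    then have "w i j * \<bar>x i + y i + (x j + y j)\<bar> \<le> w i j * (\<bar>x i + x j\<bar> + \<bar>y i + y j\<bar>)"
      by (rule mult_left_mono) (use that in auto)
    then show ?thesis by (simp add: distrib_left)
  qed
  then show ?thesis unfolding Iplus_def sum.distrib[symmetric] by (intro sum_mono) auto
qed

lemma Jfun_add: "Jfun w (\<lambda>i. x i + y i) \<le> Jfun w x + Jfun w y"
proof -
  have "(\<Sum>i\<in>UNIV. \<Sum>j\<in>UNIV. w i j * (x i + y i - (x j + y j))) =
     (\<Sum>i\<in>UNIV. \<Sum>j\<in>UNIV. w i j * (x i - x j)) + (\<Sum>i\<in>UNIV. \<Sum>j\<in>UNIV. w i j * (y i - y j))"
    unfolding sum.distrib[symmetric] by (intro sum.cong refl) (simp add: algebra_simps)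
  then show ?thesis unfolding Jfun_def by (simp add: abs_triangle_ineq)
qed

lemma ternary:
  fixes w :: "'v::finite \<Rightarrow> 'v \<Rightarrow> real"
  assumes nonneg: "\<And>i j. w i j \<ge> 0" and h0: "h \<ge> 0"
    and hcut: "\<And>S. h * min (vol w S) (vol w (UNIV - S)) \<le> min (cut_out w S) (cut_in w S)"
    and disj: "U \<inter> L = {}"
    and sdef: "s = (\<lambda>i. of_bool (i \<in> U) - of_bool (i \<in> L) :: real)"
  shows "\<exists>c. 2 * h * (\<Sum>i\<in>UNIV. deg w i * \<bar>s i - c\<bar>) \<le> vol w UNIV - Iplus w s - Jfun w s"
proof -
  have pw: "w i j * of_bool (i \<in> U \<and> j \<notin> U) + w i j * of_bool (i \<notin> U \<and> j \<in> U)
     + w i j * of_bool (i \<in> L \<and> j \<notin> L) + w i j * of_bool (i \<notin> L \<and> j \<in> L)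
     \<le> 2 * w i j - w i j * \<bar>s i + s j\<bar>" for i j
  proof -
    have "of_bool (i \<in> U \<and> j \<notin> U) + of_bool (i \<notin> U \<and> j \<in> U)
     + of_bool (i \<in> L \<and> j \<notin> L) + of_bool (i \<notin> L \<and> j \<in> L) \<le> (2 - \<bar>s i + s j\<bar> :: real)"
      using disj unfolding sdef by auto
    then have "w i j * (of_bool (i \<in> U \<and> j \<notin> U) + of_bool (i \<notin> U \<and> j \<in> U)
     + of_bool (i \<in> L \<and> j \<notin> L) + of_bool (i \<notin> L \<and> j \<in> L)) \<le> w i j * (2 - \<bar>s i + s j\<bar>)"
      by (rule mult_left_mono) (use nonneg in auto)
    then show ?thesis by (simp add: algebra_simps)
  qed
  have A: "cut_out w U + cut_in w U + cut_out w L + cut_in w L \<le> vol w UNIV - Iplus w s"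
    unfolding vol_univ Iplus_def cut_out_eq cut_in_eq sum_subtractf[symmetric] sum.distrib[symmetric]
    by (intro sum_mono pw)
  have pw2: "w i j * (s i - s j) = (w i j * of_bool (i \<in> U \<and> j \<notin> U) - w i j * of_bool (i \<notin> U \<and> j \<in> U))
     - (w i j * of_bool (i \<in> L \<and> j \<notin> L) - w i j * of_bool (i \<notin> L \<and> j \<in> L))" for i j
  proof -
    have "s i - s j = (of_bool (i \<in> U \<and> j \<notin> U) - of_bool (i \<notin> U \<and> j \<in> U))
     - (of_bool (i \<in> L \<and> j \<notin> L) - of_bool (i \<notin> L \<and> j \<in> L))"
      unfolding sdef by auto
    then show ?thesis by (simp only: right_diff_distrib[symmetric])
  qed
  have B: "(\<Sum>i\<in>UNIV. \<Sum>j\<in>UNIV. w i j * (s i - s j)) = (cut_out w U - cut_in w U) - (cut_out w L - cut_in w L)"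
    unfolding cut_out_eq cut_in_eq sum_subtractf[symmetric] pw2 by simp
  have J: "Jfun w s \<le> \<bar>cut_out w U - cut_in w U\<bar> + \<bar>cut_out w L - cut_in w L\<bar>"
    unfolding Jfun_def B by linarith
  have num: "2 * min (cut_out w U) (cut_in w U) + 2 * min (cut_out w L) (cut_in w L) \<le> vol w UNIV - Iplus w s - Jfun w s"
    using A J by linarith
  have hc: "2 * h * (min (vol w U) (vol w (UNIV - U)) + min (vol w L) (vol w (UNIV - L)))
      \<le> vol w UNIV - Iplus w s - Jfun w s"
  proof -
    have e: "2 * h * (min (vol w U) (vol w (UNIV - U)) + min (vol w L) (vol w (UNIV - L)))
      = 2 * (h * min (vol w U) (vol w (UNIV - U))) + 2 * (h * min (vol w L) (vol w (UNIV - L)))"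
      by (simp add: algebra_simps)
    show ?thesis unfolding e using hcut[of U] hcut[of L] num by linarith
  qed
  have dn: "\<And>i. deg w i \<ge> 0" using deg_nonneg nonneg by blast
  have s0: "(\<Sum>i\<in>UNIV. deg w i * \<bar>s i - 0\<bar>) = vol w U + vol w L"
  proof -
    have "deg w i * \<bar>s i - 0\<bar> = deg w i * of_bool (i \<in> U) + deg w i * of_bool (i \<in> L)" for i
      using disj unfolding sdef by auto
    then show ?thesis unfolding vol_sum_ind sum.distrib[symmetric] by simp
  qed
  have s1: "(\<Sum>i\<in>UNIV. deg w i * \<bar>s i - 1\<bar>) = vol w UNIV - vol w U + vol w L"
  proof -
    have "deg w i * \<bar>s i - 1\<bar> = deg w i - deg w i * of_bool (i \<in> U) + deg w i * of_bool (i \<in> L)" for i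
      using disj unfolding sdef by auto
    then show ?thesis unfolding vol_sum_ind sum.distrib[symmetric] sum_subtractf[symmetric] by simp
  qed
  have s2: "(\<Sum>i\<in>UNIV. deg w i * \<bar>s i - (-1)\<bar>) = vol w UNIV + vol w U - vol w L"
  proof -
    have "deg w i * \<bar>s i - (-1)\<bar> = deg w i + deg w i * of_bool (i \<in> U) - deg w i * of_bool (i \<in> L)" for i
      using disj unfolding sdef by auto
    then show ?thesis unfolding vol_sum_ind sum.distrib[symmetric] sum_subtractf[symmetric] by simp
  qed
  have vUL: "vol w U + vol w L \<le> vol w UNIV"
  proof -
    have "deg w i * of_bool (i \<in> U) + deg w i * of_bool (i \<in> L) \<le> deg w i * of_bool (i \<in> UNIV)" for i
      using disj dn[of i] by auto
    then have "(\<Sum>i\<in>UNIV. deg w i * of_bool (i \<in> U) + deg w i * of_bool (i \<in> L)) \<le> (\<Sum>i\<in>UNIV. deg w i * of_bool (i \<in> UNIV))"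
      by (intro sum_mono)
    then show ?thesis unfolding vol_sum_ind sum.distrib by simp
  qed
  have "\<exists>c. (\<Sum>i\<in>UNIV. deg w i * \<bar>s i - c\<bar>) \<le> min (vol w U) (vol w (UNIV - U)) + min (vol w L) (vol w (UNIV - L))"
  proof (cases "vol w U \<le> vol w (UNIV - U)")
    case True
    show ?thesis
    proof (cases "vol w L \<le> vol w (UNIV - L)")
      case True2: True
      show ?thesis by (rule exI[of _ 0]) (use True True2 s0 in simp)
    next
      case False
      show ?thesis by (rule exI[of _ "-1"]) (use True False s2 vUL in \<open>simp add: vol_compl\<close>)
    qed
  next
    case False
    show ?thesis by (rule exI[of _ "1"]) (use False s1 vUL in \<open>simp add: vol_compl\<close>)
  qed
  then obtain c where c: "(\<Sum>i\<in>UNIV. deg w i * \<bar>s i - c\<bar>) \<le> min (vol w U) (vol w (UNIV - U)) + min (vol w L) (vol w (UNIV - L))"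
    by blast
  have "2 * h * (\<Sum>i\<in>UNIV. deg w i * \<bar>s i - c\<bar>) \<le> 2 * h * (min (vol w U) (vol w (UNIV - U)) + min (vol w L) (vol w (UNIV - L)))"
    by (rule mult_left_mono[OF c]) (use h0 in simp)
  then show ?thesis using hc by (intro exI[of _ c]) linarith
qed

lemma key:
  fixes w :: "'v::finite \<Rightarrow> 'v \<Rightarrow> real"
  assumes nonneg: "\<And>i j. w i j \<ge> 0" and h0: "h \<ge> 0"
    and hcut: "\<And>S. h * min (vol w S) (vol w (UNIV - S)) \<le> min (cut_out w S) (cut_in w S)"
  shows "(\<forall>i. \<bar>x i\<bar> \<le> M) \<Longrightarrow> \<exists>c. 2 * h * (\<Sum>i\<in>UNIV. deg w i * \<bar>x i - c\<bar>) \<le> vol w UNIV * M - Iplus w x - Jfun w x"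
proof (induction "card {i. x i \<noteq> 0}" arbitrary: x M rule: less_induct)
  case less
  have dn: "\<And>i. deg w i \<ge> 0" using deg_nonneg nonneg by blast
  show ?case
  proof (cases "\<forall>i. x i = 0")
    case True
    then have x0: "x = (\<lambda>_. 0)" by auto
    have "M \<ge> 0" using less.prems by (meson abs_ge_zero order_trans)
    then have "0 \<le> vol w UNIV * M" using vol_nonneg[of w UNIV, OF nonneg] by simp
    then show ?thesis unfolding x0 Iplus_def Jfun_def by (intro exI[of _ 0]) simp
  next
    case False
    define Z where "Z = {i. x i \<noteq> 0}"
    have Zne: "Z \<noteq> {}" using False Z_def by auto
    define a where "a = Min ((\<lambda>i. \<bar>x i\<bar>) ` Z)"
    have afin: "finite ((\<lambda>i. \<bar>x i\<bar>) ` Z)" by simp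
    have "a \<in> (\<lambda>i. \<bar>x i\<bar>) ` Z" unfolding a_def using Min_in[OF afin] Zne by blast
    then obtain k where kZ: "k \<in> Z" and ak: "a = \<bar>x k\<bar>" by blast
    have ale: "\<And>i. i \<in> Z \<Longrightarrow> a \<le> \<bar>x i\<bar>" unfolding a_def using afin by auto
    have apos: "a > 0" using kZ ak Z_def by auto
    define s where "s = (\<lambda>i. of_bool (i \<in> {i. x i > 0}) - of_bool (i \<in> {i. x i < 0}) :: real)"
    define y where "y = (\<lambda>i. x i - a * s i)"
    have aM: "a \<le> M" using ak less.prems by auto
    have ybd: "\<forall>i. \<bar>y i\<bar> \<le> M - a"
    proof
      fix i
      show "\<bar>y i\<bar> \<le> M - a"
      proof (cases "x i = 0")
        case True then show ?thesis using aM by (simp add: y_def s_def)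
      next
        case False
        then have "a \<le> \<bar>x i\<bar>" using ale Z_def by auto
        moreover have "\<bar>x i\<bar> \<le> M" using less.prems by auto
        ultimately show ?thesis using False by (auto simp: y_def s_def)
      qed
    qed
    have sub: "{i. y i \<noteq> 0} \<subset> {i. x i \<noteq> 0}"
    proof
      show "{i. y i \<noteq> 0} \<subseteq> {i. x i \<noteq> 0}" by (auto simp: y_def s_def)
      have "y k = 0" using ak kZ Z_def by (auto simp: y_def s_def)
      then show "{i. y i \<noteq> 0} \<noteq> {i. x i \<noteq> 0}" using kZ Z_def by auto
    qed
    have "card {i. y i \<noteq> 0} < card {i. x i \<noteq> 0}" by (rule psubset_card_mono) (use sub in auto)
    from less.hyps[OF this ybd] obtain c1 where
      c1: "2 * h * (\<Sum>i\<in>UNIV. deg w i * \<bar>y i - c1\<bar>) \<le> vol w UNIV * (M - a) - Iplus w y - Jfun w y"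
      by blast
    obtain c2 where
      c2: "2 * h * (\<Sum>i\<in>UNIV. deg w i * \<bar>s i - c2\<bar>) \<le> vol w UNIV - Iplus w s - Jfun w s"
      using ternary[OF nonneg h0 hcut _ s_def] by (auto simp: disjoint_iff)
    have c2': "2 * h * (\<Sum>i\<in>UNIV. deg w i * \<bar>a * s i - a * c2\<bar>) \<le> vol w UNIV * a - Iplus w (\<lambda>i. a * s i) - Jfun w (\<lambda>i. a * s i)"
    proof -
      have "(\<Sum>i\<in>UNIV. deg w i * \<bar>a * s i - a * c2\<bar>) = a * (\<Sum>i\<in>UNIV. deg w i * \<bar>s i - c2\<bar>)"
        unfolding sum_distrib_left using apos
        by (intro sum.cong refl) (simp add: right_diff_distrib[symmetric] abs_mult)
      moreover have "a * (2 * h * (\<Sum>i\<in>UNIV. deg w i * \<bar>s i - c2\<bar>)) \<le> a * (vol w UNIV - Iplus w s - Jfun w s)"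
        by (rule mult_left_mono[OF c2]) (use apos in simp)
      ultimately show ?thesis
        using apos by (simp add: Iplus_scale[OF nonneg] Jfun_scale algebra_simps)
    qed
    have xe: "x = (\<lambda>i. a * s i + y i)" by (simp add: y_def)
    have I: "Iplus w x \<le> Iplus w (\<lambda>i. a * s i) + Iplus w y"
      unfolding xe by (rule Iplus_add[OF nonneg])
    have J: "Jfun w x \<le> Jfun w (\<lambda>i. a * s i) + Jfun w y"
      unfolding xe by (rule Jfun_add)
    have N: "(\<Sum>i\<in>UNIV. deg w i * \<bar>x i - (a * c2 + c1)\<bar>) \<le>
        (\<Sum>i\<in>UNIV. deg w i * \<bar>a * s i - a * c2\<bar>) + (\<Sum>i\<in>UNIV. deg w i * \<bar>y i - c1\<bar>)"
    proof -
      have "deg w i * \<bar>x i - (a * c2 + c1)\<bar> \<le> deg w i * \<bar>a * s i - a * c2\<bar> + deg w i * \<bar>y i - c1\<bar>" for i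
      proof -
        have "\<bar>x i - (a * c2 + c1)\<bar> \<le> \<bar>a * s i - a * c2\<bar> + \<bar>y i - c1\<bar>" unfolding y_def by linarith
        then have "deg w i * \<bar>x i - (a * c2 + c1)\<bar> \<le> deg w i * (\<bar>a * s i - a * c2\<bar> + \<bar>y i - c1\<bar>)"
          by (rule mult_left_mono) (use dn in auto)
        then show ?thesis by (simp add: distrib_left)
      qed
      then show ?thesis unfolding sum.distrib[symmetric] by (intro sum_mono)
    qed
    have "2 * h * (\<Sum>i\<in>UNIV. deg w i * \<bar>x i - (a * c2 + c1)\<bar>) \<le>
       2 * h * ((\<Sum>i\<in>UNIV. deg w i * \<bar>a * s i - a * c2\<bar>) + (\<Sum>i\<in>UNIV. deg w i * \<bar>y i - c1\<bar>))"
      by (rule mult_left_mono[OF N]) (use h0 in simp)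
    then have "2 * h * (\<Sum>i\<in>UNIV. deg w i * \<bar>x i - (a * c2 + c1)\<bar>) \<le> vol w UNIV * M - Iplus w x - Jfun w x"
      using c1 c2' I J by (simp add: algebra_simps)
    then show ?thesis by blast
  qed
qed

theorem mainTheorem1:
  fixes w :: "'v::finite \<Rightarrow> 'v \<Rightarrow> real"
  assumes nonneg: "\<And>i j. w i j \<ge> 0"
    and noloop: "\<And>i. w i i = 0"
    and posdeg: "\<And>i. deg w i > 0"
  shows "(\<exists>x. nonconstant x \<and>
            rfun w x = Min (phiD w ` {S. S \<noteq> {} \<and> S \<noteq> UNIV}))
       \<and> (\<forall>x. nonconstant x \<longrightarrow>
            Min (phiD w ` {S. S \<noteq> {} \<and> S \<noteq> UNIV}) \<le> rfun w x)"
proof -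
  define F where "F = {S::'v set. S \<noteq> {} \<and> S \<noteq> UNIV}"
  define h where "h = Min (phiD w ` F)"
  have dn: "\<And>i. deg w i \<ge> 0" using deg_nonneg nonneg by blast
  obtain i0 :: 'v where True by simp
  have "\<exists>j. w i0 j \<noteq> 0 \<or> w j i0 \<noteq> 0"
  proof (rule ccontr)
    assume "\<not> ?thesis"
    then have "deg w i0 = 0" unfolding deg_def outdeg_def indeg_def by auto
    then show False using posdeg[of i0] by simp
  qed
  then obtain j0 where "w i0 j0 \<noteq> 0 \<or> w j0 i0 \<noteq> 0" by blast
  then have "j0 \<noteq> i0" using noloop by auto
  then have "{i0} \<in> F" unfolding F_def by auto
  then have Fne: "F \<noteq> {}" by auto
  have Ffin: "finite (phiD w ` F)" by simp
  have volpos: "vol w S > 0" if Sne: "S \<noteq> {}" for S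
  proof -
    obtain p where "p \<in> S" using Sne by blast
    then have "deg w p \<le> vol w S" unfolding vol_def
      by (intro member_le_sum) (use dn in auto)
    then show ?thesis using posdeg[of p] by linarith
  qed
  have phi_nonneg: "phiD w S \<ge> 0" for S
    unfolding phiD_def using cut_nonneg[of w S, OF nonneg] vol_nonneg[of w, OF nonneg]
    by (intro divide_nonneg_nonneg) auto
  have "h \<in> phiD w ` F" unfolding h_def using Min_in[OF Ffin] Fne by blast
  then obtain Sx where SxF: "Sx \<in> F" and hSx: "h = phiD w Sx" by blast
  have h0: "h \<ge> 0" using hSx phi_nonneg by simp
  have hle: "h \<le> phiD w S" if "S \<in> F" for S
    unfolding h_def using Ffin that by auto
  have hcut: "h * min (vol w S) (vol w (UNIV - S)) \<le> min (cut_out w S) (cut_in w S)" for S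
  proof (cases "S \<in> F")
    case True
    then have mp: "min (vol w S) (vol w (UNIV - S)) > 0"
      using volpos[of S] volpos[of "UNIV - S"] unfolding F_def by auto
    have "h \<le> min (cut_out w S) (cut_in w S) / min (vol w S) (vol w (UNIV - S))"
      using hle[OF True] unfolding phiD_def .
    then show ?thesis using mp by (simp add: pos_le_divide_eq mult.commute)
  next
    case False
    then have "S = {} \<or> S = UNIV" unfolding F_def by auto
    then have "min (vol w S) (vol w (UNIV - S)) = 0"
      using vol_nonneg[of w, OF nonneg] by (auto simp: vol_def)
    then show ?thesis using cut_nonneg[of w S, OF nonneg] by simp
  qed
  have part2: "h \<le> rfun w x" if nc: "nonconstant x" for x
  proof -
    obtain p q where pq: "x p \<noteq> x q" using nc unfolding nonconstant_def by (metis ext)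
    define m where "m = min (deg w p) (deg w q)"
    have mpos: "m > 0" using posdeg unfolding m_def by simp
    have mp: "m \<le> deg w p" and mq: "m \<le> deg w q" unfolding m_def by auto
    have lb: "m * \<bar>x p - x q\<bar> \<le> (\<Sum>i\<in>UNIV. deg w i * \<bar>x i - c\<bar>)" for c
    proof -
      have "(\<Sum>i\<in>{p,q}. deg w i * \<bar>x i - c\<bar>) \<le> (\<Sum>i\<in>UNIV. deg w i * \<bar>x i - c\<bar>)"
        by (intro sum_mono2) (use dn in auto)
      moreover have "(\<Sum>i\<in>{p,q}. deg w i * \<bar>x i - c\<bar>) = deg w p * \<bar>x p - c\<bar> + deg w q * \<bar>x q - c\<bar>"
      proof -
        have "p \<noteq> q" using pq by blast
        then show ?thesis by simp
      qed
      moreover have "m * \<bar>x p - c\<bar> \<le> deg w p * \<bar>x p - c\<bar>"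
        using mult_right_mono[OF mp abs_ge_zero[of "x p - c"]] .
      moreover have "m * \<bar>x q - c\<bar> \<le> deg w q * \<bar>x q - c\<bar>"
        using mult_right_mono[OF mq abs_ge_zero[of "x q - c"]] .
      moreover have "m * \<bar>x p - x q\<bar> \<le> m * \<bar>x p - c\<bar> + m * \<bar>x q - c\<bar>"
        using mpos by (simp add: distrib_left[symmetric] mult_left_mono)
      ultimately show ?thesis by linarith
    qed
    have Npos: "Nfun w x > 0"
    proof -
      have "m * \<bar>x p - x q\<bar> \<le> Nfun w x" unfolding Nfun_def
        by (rule cINF_greatest) (use lb in auto)
      moreover have "m * \<bar>x p - x q\<bar> > 0" using mpos pq by simp
      ultimately show ?thesis by linarith
    qed
    have bd: "\<forall>i. \<bar>x i\<bar> \<le> sup_norm x" unfolding sup_norm_def by auto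
    obtain c where c: "2 * h * (\<Sum>i\<in>UNIV. deg w i * \<bar>x i - c\<bar>) \<le> vol w UNIV * sup_norm x - Iplus w x - Jfun w x"
      using key[OF nonneg h0 hcut bd] by blast
    have "Nfun w x \<le> (\<Sum>i\<in>UNIV. deg w i * \<bar>x i - c\<bar>)" unfolding Nfun_def
      by (rule cINF_lower) (auto intro!: bdd_belowI[of _ 0] sum_nonneg mult_nonneg_nonneg dn)
    then have "2 * h * Nfun w x \<le> 2 * h * (\<Sum>i\<in>UNIV. deg w i * \<bar>x i - c\<bar>)"
      by (rule mult_left_mono) (use h0 in simp)
    then have "h * (2 * Nfun w x) \<le> vol w UNIV * sup_norm x - Iplus w x - Jfun w x" using c by simp
    then show ?thesis unfolding rfun_def using Npos by (simp add: pos_le_divide_eq)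
  qed
  define x where "x = (\<lambda>i. if i \<in> Sx then 1 else -1 :: real)"
  obtain p q where pS: "p \<in> Sx" and qS: "q \<notin> Sx" using SxF unfolding F_def by auto
  have ncx: "nonconstant x" unfolding nonconstant_def
  proof
    assume "\<exists>t. x = (\<lambda>_. t)"
    then obtain t where "x = (\<lambda>_. t)" by blast
    then have "x p = x q" by simp
    then show False using pS qS unfolding x_def by simp
  qed
  have sn: "sup_norm x = 1"
  proof -
    have "range (\<lambda>i. \<bar>x i\<bar>) = {1}" unfolding x_def by auto
    then show ?thesis unfolding sup_norm_def by simp
  qed
  have n1: "vol w UNIV - Iplus w x = 2 * (cut_out w Sx + cut_in w Sx)"
  proof -
    have "2 * w i j - w i j * \<bar>x i + x j\<bar> = 2 * (w i j * of_bool (i \<in> Sx \<and> j \<notin> Sx)) + 2 * (w i j * of_bool (i \<notin> Sx \<and> j \<in> Sx))" for i j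
      unfolding x_def by auto
    then have "vol w UNIV - Iplus w x = (\<Sum>i\<in>UNIV. \<Sum>j\<in>UNIV. 2 * (w i j * of_bool (i \<in> Sx \<and> j \<notin> Sx)) + 2 * (w i j * of_bool (i \<notin> Sx \<and> j \<in> Sx)))"
      unfolding vol_univ Iplus_def sum_subtractf[symmetric] by simp
    also have "\<dots> = 2 * (cut_out w Sx + cut_in w Sx)"
      unfolding cut_out_eq cut_in_eq by (simp only: sum.distrib sum_distrib_left distrib_left)
    finally show ?thesis .
  qed
  have n2: "Jfun w x = 2 * \<bar>cut_out w Sx - cut_in w Sx\<bar>"
  proof -
    have "w i j * (x i - x j) = 2 * (w i j * of_bool (i \<in> Sx \<and> j \<notin> Sx)) - 2 * (w i j * of_bool (i \<notin> Sx \<and> j \<in> Sx))" for i j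
      unfolding x_def by auto
    then have "(\<Sum>i\<in>UNIV. \<Sum>j\<in>UNIV. w i j * (x i - x j)) = (\<Sum>i\<in>UNIV. \<Sum>j\<in>UNIV. 2 * (w i j * of_bool (i \<in> Sx \<and> j \<notin> Sx)) - 2 * (w i j * of_bool (i \<notin> Sx \<and> j \<in> Sx)))"
      by simp
    also have "\<dots> = 2 * (cut_out w Sx - cut_in w Sx)"
      unfolding cut_out_eq cut_in_eq by (simp only: sum_subtractf sum_distrib_left right_diff_distrib)
    finally have "(\<Sum>i\<in>UNIV. \<Sum>j\<in>UNIV. w i j * (x i - x j)) = 2 * (cut_out w Sx - cut_in w Sx)" .
    then show ?thesis unfolding Jfun_def by (simp only: abs_mult)
  qed
  have num: "vol w UNIV * sup_norm x - Iplus w x - Jfun w x = 4 * min (cut_out w Sx) (cut_in w Sx)"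
  proof (cases "cut_out w Sx \<le> cut_in w Sx")
    case True
    then have m1: "min (cut_out w Sx) (cut_in w Sx) = cut_out w Sx" by (rule min_absorb1)
    have a1: "\<bar>cut_out w Sx - cut_in w Sx\<bar> = cut_in w Sx - cut_out w Sx" using True by simp
    have "vol w UNIV * sup_norm x - Iplus w x - Jfun w x = 2 * (cut_out w Sx + cut_in w Sx) - 2 * (cut_in w Sx - cut_out w Sx)"
      unfolding sn mult_1_right n1 n2 a1 by (rule refl)
    then show ?thesis unfolding m1 by (simp add: algebra_simps)
  next
    case False
    then have m1: "min (cut_out w Sx) (cut_in w Sx) = cut_in w Sx" by (intro min_absorb2) linarith
    have a1: "\<bar>cut_out w Sx - cut_in w Sx\<bar> = cut_out w Sx - cut_in w Sx" using False by simp
    have "vol w UNIV * sup_norm x - Iplus w x - Jfun w x = 2 * (cut_out w Sx + cut_in w Sx) - 2 * (cut_out w Sx - cut_in w Sx)"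
      unfolding sn mult_1_right n1 n2 a1 by (rule refl)
    then show ?thesis unfolding m1 by (simp add: algebra_simps)
  qed
  have Nsum: "(\<Sum>i\<in>UNIV. deg w i * \<bar>x i - c\<bar>) = vol w Sx * \<bar>1 - c\<bar> + vol w (UNIV - Sx) * \<bar>1 + c\<bar>" for c
  proof -
    have pw: "deg w i * \<bar>x i - c\<bar> = deg w i * of_bool (i \<in> Sx) * \<bar>1 - c\<bar> + deg w i * of_bool (i \<in> UNIV - Sx) * \<bar>1 + c\<bar>" for i
      unfolding x_def by auto
    have "(\<Sum>i\<in>UNIV. deg w i * \<bar>x i - c\<bar>) = (\<Sum>i\<in>UNIV. deg w i * of_bool (i \<in> Sx) * \<bar>1 - c\<bar> + deg w i * of_bool (i \<in> UNIV - Sx) * \<bar>1 + c\<bar>)"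
      by (intro sum.cong refl pw)
    also have "\<dots> = (\<Sum>i\<in>UNIV. deg w i * of_bool (i \<in> Sx)) * \<bar>1 - c\<bar> + (\<Sum>i\<in>UNIV. deg w i * of_bool (i \<in> UNIV - Sx)) * \<bar>1 + c\<bar>"
      by (simp only: sum.distrib sum_distrib_right)
    finally show ?thesis unfolding vol_sum_ind .
  qed
  define mv where "mv = min (vol w Sx) (vol w (UNIV - Sx))"
  have mvpos: "mv > 0" unfolding mv_def using volpos[of Sx] volpos[of "UNIV - Sx"] SxF unfolding F_def by auto
  have Nx: "Nfun w x = 2 * mv"
  proof (rule antisym)
    show "Nfun w x \<le> 2 * mv"
    proof (cases "vol w Sx \<le> vol w (UNIV - Sx)")
      case True
      have "Nfun w x \<le> (\<Sum>i\<in>UNIV. deg w i * \<bar>x i - (-1)\<bar>)" unfolding Nfun_def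
        by (rule cINF_lower) (auto intro!: bdd_belowI[of _ 0] sum_nonneg mult_nonneg_nonneg dn)
      then show ?thesis using True unfolding Nsum mv_def by simp
    next
      case False
      have "Nfun w x \<le> (\<Sum>i\<in>UNIV. deg w i * \<bar>x i - 1\<bar>)" unfolding Nfun_def
        by (rule cINF_lower) (auto intro!: bdd_belowI[of _ 0] sum_nonneg mult_nonneg_nonneg dn)
      then show ?thesis using False unfolding Nsum mv_def by simp
    qed
    show "2 * mv \<le> Nfun w x" unfolding Nfun_def
    proof (rule cINF_greatest)
      fix c :: real
      have "mv * \<bar>1 - c\<bar> \<le> vol w Sx * \<bar>1 - c\<bar>"
        by (rule mult_right_mono) (simp_all add: mv_def)
      moreover have "mv * \<bar>1 + c\<bar> \<le> vol w (UNIV - Sx) * \<bar>1 + c\<bar>"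
        by (rule mult_right_mono) (simp_all add: mv_def)
      moreover have "2 * mv \<le> mv * \<bar>1 - c\<bar> + mv * \<bar>1 + c\<bar>"
      proof -
        have "2 \<le> \<bar>1 - c\<bar> + \<bar>1 + c\<bar>" by linarith
        then have "mv * 2 \<le> mv * (\<bar>1 - c\<bar> + \<bar>1 + c\<bar>)" by (rule mult_left_mono) (use mvpos in simp)
        then show ?thesis by (simp add: distrib_left)
      qed
      ultimately show "2 * mv \<le> (\<Sum>i\<in>UNIV. deg w i * \<bar>x i - c\<bar>)" unfolding Nsum by linarith
    qed simp
  qed
  have "rfun w x = (4 * min (cut_out w Sx) (cut_in w Sx)) / (2 * (2 * mv))"
    unfolding rfun_def num Nx ..
  also have "\<dots> = min (cut_out w Sx) (cut_in w Sx) / mv" by simp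
  finally have "rfun w x = phiD w Sx" unfolding phiD_def mv_def .
  then have part1: "nonconstant x \<and> rfun w x = h" using ncx hSx by simp
  show ?thesis using part1 part2 unfolding h_def F_def by blast
qed

end
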